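(* Let $q$ be a prime power and $\mathcal{C}_2 \subsetneqq \mathcal{C}_1 \subseteq \mathbb{F}_q^{m \times n}$ be $\mathbb{F}_q$-linear codes, $\ell = \dim \mathcal{C}_1 - \dim \mathcal{C}_2$. Fix a subspace $\mathcal{W}$ with $\mathcal{C}_1 = \mathcal{C}_2 \oplus \mathcal{W}$ and an isomorphism $\psi : \mathbb{F}_q^\ell \to \mathcal{W}$; let $\mathbf{x}$ be uniform on $\mathbb{F}_q^\ell$ and $C = \psi(\mathbf{x}) + D$ with $D$ uniform on $\mathcal{C}_2$ independent of $\mathbf{x}$. Let $B \in \mathbb{F}_q^{\mu \times n}$ and $\mathcal{L} = {\rm Row}(B)$. Then, with mutual information computed with logarithms to base $q$, $$I(\mathbf{x}; CB^T) = \dim(\mathcal{C}_2^\perp \cap \mathcal{V}_\mathcal{L}) - \dim(\mathcal{C}_1^\perp \cap \mathcal{V}_\mathcal{L}).$$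
   Context: ${\rm Row}(B)$ is the row space of $B$. For a subspace $\mathcal{L} \subseteq \mathbb{F}_q^n$, $\mathcal{V}_\mathcal{L} = \{V \in \mathbb{F}_q^{m\times n} \mid {\rm Row}(V) \subseteq \mathcal{L}\}$. The dual of a linear code $\mathcal{C} \subseteq \mathbb{F}_q^{m \times n}$ is $\mathcal{C}^\perp = \{D \in \mathbb{F}_q^{m\times n} \mid {\rm Trace}(CD^T) = 0 \ \forall C \in \mathcal{C}\}$. *)

theory Defs
  imports "HOL-Analysis.Analysis" "HOL-Probability.Probability"
begin

text \<open>Matrices over a field: m x n matrices are elements of 'a^'n^'m.
  Scalar multiplication on matrices, making 'a^'n^'m an 'a-vector space.\<close>

definition mscale :: "'a::field \<Rightarrow> 'a^'n^'m \<Rightarrow> 'a^'n^'m" where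
  "mscale c A = (\<chi> i j. c * A $ i $ j)"

lemma mscale_vector_space: "vector_space (mscale :: 'a::field \<Rightarrow> 'a^'n^'m \<Rightarrow> 'a^'n^'m)"
  by unfold_locales (auto simp: mscale_def vec_eq_iff algebra_simps)

definition row_space :: "'a::field^'n^'m \<Rightarrow> ('a^'n) set" where
  "row_space B = vec.span (rows B)"

definition V_of :: "('a::field^'n) set \<Rightarrow> ('a^'n^'m) set" where
  "V_of L = {V. row_space V \<subseteq> L}"

definition dual_code :: "('a::field^'n^'m) set \<Rightarrow> ('a^'n^'m) set" where
  "dual_code C = {D. \<forall>c\<in>C. trace (c ** transpose D) = 0}"

abbreviation mdim :: "('a::field^'n^'m) set \<Rightarrow> nat" where
  "mdim S \<equiv> vector_space.dim mscale S"

abbreviation msubspace :: "('a::field^'n^'m) set \<Rightarrow> bool" where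
  "msubspace S \<equiv> module.subspace mscale S"

end

theory Submission
  imports Defs
begin


lemma cnt: "finite A \<Longrightarrow> (\<Sum>x\<in>A. if P x then 1 else (0::nat)) = card {x\<in>A. P x}"
  by (simp add: sum.inter_filter[symmetric])

lemma (in vector_space) card_subspace_pow:
  assumes finb: "finite (UNIV :: 'b set)" and S: "subspace S"
  shows "card S = CARD('a) ^ dim S"
proof -
  obtain \<beta> where \<beta>: "\<beta> \<subseteq> S" "independent \<beta>" "S \<subseteq> span \<beta>" "card \<beta> = dim S"
    by (rule basis_exists)
  have fin\<beta>: "finite \<beta>" using finb by (rule finite_subset[OF subset_UNIV])
  have spanS: "span \<beta> = S" using span_subspace[OF \<beta>(1) \<beta>(3) S] .
  define h where "h = (\<lambda>u. \<Sum>v\<in>\<beta>. u v *s v)"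
  define PI where "PI = PiE \<beta> (\<lambda>_. (UNIV :: 'a set))"
  have img: "h ` PI = S"
  proof -
    have "h ` PI = range h"
    proof
      show "range h \<subseteq> h ` PI"
      proof
        fix y assume "y \<in> range h"
        then obtain u where y: "y = h u" by auto
        have "restrict u \<beta> \<in> PI" by (simp add: PI_def)
        moreover have "h (restrict u \<beta>) = h u" unfolding h_def by (rule sum.cong) auto
        ultimately show "y \<in> h ` PI" using y by (metis image_eqI)
      qed
    qed auto
    also have "\<dots> = span \<beta>" using span_finite[OF fin\<beta>] by (simp add: h_def)
    finally show ?thesis using spanS by simp
  qed
  have inj: "inj_on h PI"
  proof
    fix u u' assume u: "u \<in> PI" and u': "u' \<in> PI" and eq: "h u = h u'"
    have "(\<Sum>v\<in>\<beta>. (u v - u' v) *s v) = h u - h u'"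
      unfolding h_def by (simp add: scale_left_diff_distrib sum_subtractf)
    also have "\<dots> = 0" using eq by simp
    finally have z: "(\<Sum>v\<in>\<beta>. (u v - u' v) *s v) = 0" .
    have "\<forall>c. (\<Sum>v\<in>\<beta>. c v *s v) = 0 \<longrightarrow> (\<forall>v\<in>\<beta>. c v = 0)"
      using \<beta>(2) dependent_finite[OF fin\<beta>] by blast
    then have "\<forall>v\<in>\<beta>. u v - u' v = 0" using z by (auto dest: spec[where x="\<lambda>v. u v - u' v"])
    then show "u = u'" using u u' unfolding PI_def
      by (intro PiE_ext) auto
  qed
  have "card S = card PI" using card_image[OF inj] img by simp
  also have "\<dots> = CARD('a) ^ card \<beta>" unfolding PI_def by (simp add: card_PiE fin\<beta>)
  finally show ?thesis using \<beta>(4) by simp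
qed

lemma (in vector_space) functional_kernel_card:
  fixes \<phi> :: "'b \<Rightarrow> 'a"
  assumes finb: "finite (UNIV :: 'b set)"
    and add: "\<And>x y. \<phi> (x + y) = \<phi> x + \<phi> y" and hom: "\<And>c x. \<phi> (c *s x) = c * \<phi> x"
    and U: "subspace U" and u1: "u1 \<in> U" "\<phi> u1 \<noteq> 0"
  shows "card {u\<in>U. \<phi> u = 0} * CARD('a) = card U"
proof -
  define u0 where "u0 = inverse (\<phi> u1) *s u1"
  have u0U: "u0 \<in> U" unfolding u0_def using U u1 by (simp add: subspace_scale)
  have phi0: "\<phi> u0 = 1" unfolding u0_def using u1 by (simp add: hom)
  have phidiff: "\<phi> (x - y) = \<phi> x - \<phi> y" for x y
    using add[of "x - y" y] by simp
  define K where "K = {u\<in>U. \<phi> u = 0}"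
  define m where "m = (\<lambda>(k, t). k + t *s u0)"
  have inj: "inj_on m (K \<times> (UNIV :: 'a set))"
  proof (rule inj_onI)
    fix x y assume x: "x \<in> K \<times> (UNIV :: 'a set)" and y: "y \<in> K \<times> (UNIV :: 'a set)"
      and eq0: "m x = m y"
    obtain k t where xk: "x = (k, t)" by (cases x)
    obtain k' t' where yk: "y = (k', t')" by (cases y)
    have k: "(k, t) \<in> K \<times> UNIV" using x xk by simp
    have k': "(k', t') \<in> K \<times> UNIV" using y yk by simp
    have eq: "m (k, t) = m (k', t')" using eq0 xk yk by simp
    have "\<phi> (m (k, t)) = t" using k by (simp add: m_def K_def add hom phi0)
    moreover have "\<phi> (m (k', t')) = t'" using k' by (simp add: m_def K_def add hom phi0)
    ultimately have "t = t'" using eq by simp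
    then show "x = y" using eq xk yk by (simp add: m_def)
  qed
  have img: "m ` (K \<times> UNIV) = U"
  proof
    show "m ` (K \<times> UNIV) \<subseteq> U"
      using u0U U by (auto simp: m_def K_def intro!: subspace_add subspace_scale)
    show "U \<subseteq> m ` (K \<times> UNIV)"
    proof
      fix u assume u: "u \<in> U"
      have "u - \<phi> u *s u0 \<in> K" using u u0U U
        by (simp add: K_def phidiff hom phi0 subspace_diff subspace_scale)
      moreover have "u = m (u - \<phi> u *s u0, \<phi> u)" by (simp add: m_def)
      ultimately show "u \<in> m ` (K \<times> UNIV)" by blast
    qed
  qed
  have "card U = card (K \<times> (UNIV :: 'a set))" using card_image[OF inj] img by simp
  also have "\<dots> = card K * CARD('a)" by (simp add: card_cartesian_product)
  finally show ?thesis by (simp add: K_def)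
qed

lemma (in vector_space) duality_card:
  fixes p :: "'b \<Rightarrow> 'b \<Rightarrow> 'a"
  assumes finb: "finite (UNIV :: 'b set)" and fina: "finite (UNIV :: 'a set)"
    and add1: "\<And>x y z. p (x + y) z = p x z + p y z" and hom1: "\<And>c x z. p (c *s x) z = c * p x z"
    and add2: "\<And>x y z. p z (x + y) = p z x + p z y" and hom2: "\<And>c x z. p z (c *s x) = c * p z x"
    and nondeg: "\<And>s. s \<noteq> 0 \<Longrightarrow> \<exists>T. p s T \<noteq> 0"
    and S: "subspace S"
  shows "card S * card {T. \<forall>s\<in>S. p s T = 0} = card (UNIV :: 'b set)"
proof -
  define V where "V = card (UNIV :: 'b set)"
  define q where "q = CARD('a)"
  define Pp where "Pp = {T. \<forall>s\<in>S. p s T = 0}"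
  have q2: "q \<ge> 2"
  proof -
    have "card {0::'a, 1} \<le> q" unfolding q_def by (rule card_mono[OF fina]) auto
    then show ?thesis by simp
  qed
  have finS: "finite S" using finb by (rule finite_subset[OF subset_UNIV])
  have S0: "0 \<in> S" using S by (rule subspace_0)
  have p0: "p 0 T = 0" for T using hom1[of 0 0 T] by simp
  define \<Sigma> where "\<Sigma> = (\<Sum>s\<in>S. \<Sum>T\<in>(UNIV::'b set). (if p s T = 0 then 1 else 0::nat))"
  have c1: "q * card {T. p s T = 0} = (if s = 0 then q * V else V)" if "s \<in> S" for s
  proof (cases "s = 0")
    case True then show ?thesis by (simp add: p0 V_def)
  next
    case False
    then obtain T where "p s T \<noteq> 0" using nondeg by blast
    then have "card {u\<in>UNIV. p s u = 0} * CARD('a) = card (UNIV :: 'b set)"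
      by (intro functional_kernel_card[OF finb]) (auto simp: add2 hom2 subspace_UNIV)
    then show ?thesis using False by (simp add: q_def V_def mult.commute)
  qed
  have "\<Sigma> = (\<Sum>s\<in>S. card {T. p s T = 0})"
    unfolding \<Sigma>_def using cnt[OF finb] by simp
  then have "q * \<Sigma> = (\<Sum>s\<in>S. q * card {T. p s T = 0})"
    by (simp add: sum_distrib_left)
  also have "\<dots> = (\<Sum>s\<in>S. (if s = 0 then q * V else V))"
    using c1 by (intro sum.cong) auto
  also have "\<dots> = q * V + (card S - 1) * V"
    using S0 finS by (simp add: sum.remove)
  finally have e1: "q * \<Sigma> = q * V + (card S - 1) * V" .
  have c2: "q * card {s\<in>S. p s T = 0} = (if T \<in> Pp then q * card S else card S)" for T
  proof (cases "T \<in> Pp")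
    case True
    then have "{s\<in>S. p s T = 0} = S" by (auto simp: Pp_def)
    then show ?thesis using True by simp
  next
    case False
    then obtain s where "s \<in> S" "p s T \<noteq> 0" by (auto simp: Pp_def)
    then have "card {u\<in>S. p u T = 0} * CARD('a) = card S"
      by (intro functional_kernel_card[OF finb]) (auto simp: add1 hom1 S)
    then show ?thesis using False by (simp add: q_def mult.commute)
  qed
  have "\<Sigma> = (\<Sum>T\<in>(UNIV::'b set). \<Sum>s\<in>S. (if p s T = 0 then 1 else 0::nat))"
    unfolding \<Sigma>_def by (rule sum.swap)
  also have "\<dots> = (\<Sum>T\<in>(UNIV::'b set). card {s\<in>S. p s T = 0})"
    using cnt[OF finS] by simp
  finally have "q * \<Sigma> = (\<Sum>T\<in>(UNIV::'b set). q * card {s\<in>S. p s T = 0})"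
    by (simp add: sum_distrib_left)
  also have "\<dots> = (\<Sum>T\<in>(UNIV::'b set). (if T \<in> Pp then q * card S else card S))"
    using c2 by simp
  also have "\<dots> = card Pp * (q * card S) + (V - card Pp) * card S"
    using finb card_Diff_subset[OF finite_subset[OF subset_UNIV finb] subset_UNIV, of Pp] by (simp add: sum.If_cases V_def card_Diff_subset Compl_eq_Diff_UNIV)
  finally have e2: "q * \<Sigma> = card Pp * (q * card S) + (V - card Pp) * card S" .
  have PV: "card Pp \<le> V" unfolding V_def by (rule card_mono[OF finb]) auto
  have S1: "card S \<ge> 1" using S0 finS by (metis One_nat_def Suc_leI card_gt_0_iff empty_iff)
  from e1 e2 have "int q * int V + (int (card S) - 1) * int V
      = int (card Pp) * (int q * int (card S)) + (int V - int (card Pp)) * int (card S)"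
    using PV S1 by (metis of_nat_add of_nat_diff of_nat_mult of_nat_1)
  then have "(int q - 1) * (int V - int (card S) * int (card Pp)) = 0"
    by (simp add: algebra_simps)
  then have "int V = int (card S) * int (card Pp)" using q2 by simp
  then have "V = card S * card Pp" by (metis of_nat_eq_iff of_nat_mult)
  then show ?thesis by (simp add: V_def Pp_def)
qed



interpretation mv: vector_space "mscale :: 'a::field \<Rightarrow> 'a^'n^'m \<Rightarrow> 'a^'n^'m"
  by (rule mscale_vector_space)

lemma fiber_card_add:
  fixes g :: "'v::ab_group_add \<Rightarrow> 'w::ab_group_add"
  assumes add: "\<And>x y. g (x + y) = g x + g y"
    and P: "\<And>x y. x \<in> P \<Longrightarrow> y \<in> P \<Longrightarrow> x + y \<in> P" "\<And>x y. x \<in> P \<Longrightarrow> y \<in> P \<Longrightarrow> x - y \<in> P"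
    and x0: "x0 \<in> P"
  shows "card {x\<in>P. g x = g x0} = card {x\<in>P. g x = 0}"
proof -
  have gd: "g (x - y) = g x - g y" for x y using add[of "x - y" y] by (simp add: algebra_simps)
  have "{x\<in>P. g x = g x0} = (\<lambda>k. x0 + k) ` {x\<in>P. g x = 0}"
  proof
    show "{x\<in>P. g x = g x0} \<subseteq> (\<lambda>k. x0 + k) ` {x\<in>P. g x = 0}"
    proof
      fix x assume x: "x \<in> {x\<in>P. g x = g x0}"
      then have "x - x0 \<in> {x\<in>P. g x = 0}" using P x0 by (simp add: gd)
      moreover have "x = x0 + (x - x0)" by simp
      ultimately show "x \<in> (\<lambda>k. x0 + k) ` {x\<in>P. g x = 0}" by blast
    qed
    show "(\<lambda>k. x0 + k) ` {x\<in>P. g x = 0} \<subseteq> {x\<in>P. g x = g x0}"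
      using P x0 by (auto simp: add)
  qed
  moreover have "inj_on (\<lambda>k. x0 + k) {x\<in>P. g x = 0}" by (rule inj_onI) simp
  ultimately show ?thesis by (simp add: card_image)
qed

lemma image_card_add:
  fixes g :: "'v::ab_group_add \<Rightarrow> 'w::ab_group_add"
  assumes add: "\<And>x y. g (x + y) = g x + g y"
    and P: "\<And>x y. x \<in> P \<Longrightarrow> y \<in> P \<Longrightarrow> x + y \<in> P" "\<And>x y. x \<in> P \<Longrightarrow> y \<in> P \<Longrightarrow> x - y \<in> P"
    and fin: "finite P"
  shows "card (g ` P) * card {x\<in>P. g x = 0} = card P"
proof -
  have "card P = (\<Sum>y\<in>g ` P. card {x\<in>P. g x = y})"
    using sum.image_gen[OF fin, of "\<lambda>_. (1::nat)" g] by simp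
  also have "\<dots> = (\<Sum>y\<in>g ` P. card {x\<in>P. g x = 0})"
  proof (rule sum.cong[OF refl])
    fix y assume "y \<in> g ` P"
    then obtain x0 where "x0 \<in> P" "y = g x0" by auto
    then show "card {x\<in>P. g x = y} = card {x\<in>P. g x = 0}"
      using fiber_card_add[OF add P] by simp
  qed
  finally show ?thesis by simp
qed

lemma matrix_add_rdistrib':
  fixes A A' :: "'a::semiring_1^'k^'m" and M :: "'a^'n^'k"
  shows "(A + A') ** M = A ** M + A' ** M"
  by (simp add: matrix_matrix_mult_def vec_eq_iff distrib_right sum.distrib)

lemma mscale_mult_left:
  fixes A :: "'a::field^'k^'m" and M :: "'a^'n^'k"
  shows "mscale c A ** M = mscale c (A ** M)"
  by (simp add: matrix_matrix_mult_def mscale_def vec_eq_iff sum_distrib_left mult.assoc)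

lemma matrix_diff_rdistrib':
  fixes A A' :: "'a::ring_1^'k^'m" and M :: "'a^'n^'k"
  shows "(A - A') ** M = A ** M - A' ** M"
  by (simp add: matrix_matrix_mult_def vec_eq_iff left_diff_distrib sum_subtractf)

definition ip :: "'a::semiring_1^'n^'m \<Rightarrow> 'a^'n^'m \<Rightarrow> 'a" where
  "ip X Y = (\<Sum>i\<in>UNIV. \<Sum>j\<in>UNIV. X$i$j * Y$i$j)"

lemma trace_ip: "trace (X ** transpose Y) = ip X Y"
  by (simp add: trace_def matrix_matrix_mult_def transpose_def ip_def)

lemma ip_add1: "ip (X + X') Y = ip X Y + ip X' Y"
  by (simp add: ip_def distrib_right sum.distrib)
lemma ip_add2: "ip Y (X + X') = ip Y X + ip Y X'"
  by (simp add: ip_def distrib_left sum.distrib)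
lemma ip_hom1: "ip (mscale c X) Y = c * ip X Y"
  by (simp add: ip_def mscale_def sum_distrib_left mult.assoc)
lemma ip_hom2: "ip Y (mscale c X) = c * (ip Y X :: 'a::field)"
  by (simp add: ip_def mscale_def sum_distrib_left mult_ac)

lemma ip_nondeg:
  fixes s :: "'a::field^'n^'m"
  assumes "s \<noteq> 0" shows "\<exists>T. ip s T \<noteq> 0"
proof -
  obtain i j where ij: "s$i$j \<noteq> 0" using assms by (auto simp: vec_eq_iff)
  define T :: "'a^'n^'m" where "T = (\<chi> i' j'. if i' = i \<and> j' = j then 1 else 0)"
  have inner: "(\<Sum>jj\<in>UNIV. if ii = i \<and> jj = j then s$i$j else 0) = (if ii = i then s$i$j else 0)" for ii
    by (cases "ii = i") auto
  have "ip s T = (\<Sum>ii\<in>UNIV. \<Sum>jj\<in>UNIV. if ii = i \<and> jj = j then s$i$j else 0)"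
    unfolding ip_def T_def by (intro sum.cong refl) auto
  also have "\<dots> = s$i$j" by (simp add: inner)
  finally have "ip s T = s$i$j" .
  then show ?thesis using ij by (intro exI[of _ T]) simp
qed

lemma duality_card_mat:
  fixes S :: "('a::{finite,field}^'n^'m) set"
  assumes S: "msubspace S"
  shows "card S * card {T. \<forall>s\<in>S. ip s T = 0} = CARD('a^'n^'m)"
  by (rule mv.duality_card) (auto simp: ip_add1 ip_add2 ip_hom1 ip_hom2 ip_nondeg S)



lemma distributed_pmf_count:
  fixes p :: "'c pmf" and X :: "'c \<Rightarrow> 'x"
  shows "distributed (measure_pmf p) (count_space UNIV) X (\<lambda>x. ennreal (pmf (map_pmf X p) x))"
  unfolding distributed_def
  using measure_pmf_eq_density[of "map_pmf X p"] by (simp add: map_pmf_rep_eq)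

lemma MI_pmf:
  fixes p :: "'c pmf" and X :: "'c \<Rightarrow> 'x::finite" and Y :: "'c \<Rightarrow> 'y::finite"
  assumes b: "1 < b"
  shows "prob_space.mutual_information (measure_pmf p) b (count_space UNIV) (count_space UNIV) X Y
    = (\<Sum>z\<in>UNIV. pmf (map_pmf (\<lambda>\<omega>. (X \<omega>, Y \<omega>)) p) z *
        log b (pmf (map_pmf (\<lambda>\<omega>. (X \<omega>, Y \<omega>)) p) z /
          (pmf (map_pmf X p) (fst z) * pmf (map_pmf Y p) (snd z))))"
proof -
  interpret information_space "measure_pmf p" b
    by unfold_locales (rule b)
  have pc: "count_space (UNIV::'x set) \<Otimes>\<^sub>M count_space (UNIV::'y set) = count_space UNIV"
    by (simp add: pair_measure_count_space)
  have d: "distributed (measure_pmf p) (count_space UNIV \<Otimes>\<^sub>M count_space UNIV) (\<lambda>\<omega>. (X \<omega>, Y \<omega>))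
      (\<lambda>x. ennreal (pmf (map_pmf (\<lambda>\<omega>. (X \<omega>, Y \<omega>)) p) x))"
    unfolding pc by (rule distributed_pmf_count)
  show ?thesis
    apply (subst mutual_information_distr[OF _ _ distributed_pmf_count _ distributed_pmf_count _ d])
    apply (auto simp: sigma_finite_measure_count_space_finite pc lebesgue_integral_count_space_finite)
    done
qed

lemma pair_pmf_of_set':
  assumes "finite A" "A \<noteq> {}" "finite B" "B \<noteq> {}"
  shows "pair_pmf (pmf_of_set A) (pmf_of_set B) = pmf_of_set (A \<times> B)"
  by (rule pmf_eqI) (auto simp: pmf_pair assms card_cartesian_product indicator_def)

lemma rowspace_char:
  fixes V :: "'a::field^'n^'m" and B :: "'a^'n^'u"
  shows "V \<in> V_of (row_space B) \<longleftrightarrow> (\<exists>A. V = A ** B)"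
proof
  assume "V \<in> V_of (row_space B)"
  then have sub: "vec.span (rows V) \<subseteq> vec.span (rows B)"
    by (simp add: V_of_def row_space_def)
  define R where "R = {x::'a^'n. \<exists>a. x = (\<Sum>k\<in>UNIV. a k *s B$k)}"
  have subR: "vec.subspace R"
    unfolding vec.subspace_def R_def
  proof (intro conjI ballI allI)
    show "0 \<in> {x::'a^'n. \<exists>a. x = (\<Sum>k\<in>UNIV. a k *s B$k)}"
      by (intro CollectI exI[of _ "\<lambda>_. 0"]) simp
    fix x y assume "x \<in> {x::'a^'n. \<exists>a. x = (\<Sum>k\<in>UNIV. a k *s B$k)}"
      "y \<in> {x::'a^'n. \<exists>a. x = (\<Sum>k\<in>UNIV. a k *s B$k)}"
    then obtain a a' where "x = (\<Sum>k\<in>UNIV. a k *s B$k)" "y = (\<Sum>k\<in>UNIV. a' k *s B$k)" by auto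
    then show "x + y \<in> {x::'a^'n. \<exists>a. x = (\<Sum>k\<in>UNIV. a k *s B$k)}"
      by (intro CollectI exI[of _ "\<lambda>k. a k + a' k"]) (simp add: sum.distrib vec.scale_left_distrib)
  next
    fix c x assume "x \<in> {x::'a^'n. \<exists>a. x = (\<Sum>k\<in>UNIV. a k *s B$k)}"
    then obtain a where "x = (\<Sum>k\<in>UNIV. a k *s B$k)" by auto
    then show "c *s x \<in> {x::'a^'n. \<exists>a. x = (\<Sum>k\<in>UNIV. a k *s B$k)}"
      by (intro CollectI exI[of _ "\<lambda>k. c * a k"]) (simp add: vec.scale_sum_right)
  qed
  have rowsR: "rows B \<subseteq> R"
  proof
    fix x assume "x \<in> rows B"
    then obtain i where x: "x = B$i" by (auto simp: rows_def row_def vec_lambda_eta)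
    have "(\<Sum>k\<in>UNIV. (if k = i then 1 else 0) *s B$k) = B$i"
    proof -
      have "(\<Sum>k\<in>UNIV. (if k = i then 1 else 0) *s B$k) = (\<Sum>k\<in>UNIV. if k = i then B$k else 0)"
        by (intro sum.cong refl) (auto simp only: vector_smult_lid vector_smult_lzero split: if_split)
      also have "\<dots> = B$i" by simp
      finally show ?thesis .
    qed
    then show "x \<in> R" unfolding R_def x
      by (intro CollectI exI[of _ "\<lambda>k. if k = i then 1 else 0"]) (rule sym)
  qed
  have spR: "vec.span (rows B) \<subseteq> R" by (rule vec.span_minimal[OF rowsR subR])
  have "V$i \<in> R" for i
  proof -
    have rV: "V$i \<in> rows V" unfolding rows_def row_def vec_lambda_eta by blast
    show ?thesis using vec.span_base[OF rV] sub spR by blast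
  qed
  then have "\<forall>i. \<exists>a. V$i = (\<Sum>k\<in>UNIV. a k *s B$k)"
    unfolding R_def by blast
  then obtain a where a: "\<And>i. V$i = (\<Sum>k\<in>UNIV. a i k *s B$k)" by metis
  have "V = (\<chi> i k. a i k) ** B"
    by (simp add: vec_eq_iff matrix_matrix_mult_def a sum_component)
  then show "\<exists>A. V = A ** B" by blast
next
  assume "\<exists>A. V = A ** B"
  then obtain A where V: "V = A ** B" by blast
  have "rows V \<subseteq> vec.span (rows B)"
  proof
    fix x assume "x \<in> rows V"
    then obtain i where x: "x = V$i" by (auto simp: rows_def row_def vec_lambda_eta)
    have "x = (\<Sum>k\<in>UNIV. A$i$k *s B$k)"
      by (simp add: x V vec_eq_iff matrix_matrix_mult_def sum_component)
    also have "\<dots> \<in> vec.span (rows B)"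
    proof (rule vec.span_sum)
      fix k show "A$i$k *s B$k \<in> vec.span (rows B)"
        by (rule vec.span_scale, rule vec.span_base)
           (auto simp: rows_def row_def vec_lambda_eta)
    qed
    finally show "x \<in> vec.span (rows B)" .
  qed
  then have "vec.span (rows V) \<subseteq> vec.span (rows B)"
    by (rule vec.span_minimal) (rule vec.subspace_span)
  then show "V \<in> V_of (row_space B)" by (simp add: V_of_def row_space_def)
qed

lemma msubspace_image:
  fixes h :: "'a::field^'n^'m \<Rightarrow> 'a^'k^'j"
  assumes add: "\<And>x y. h (x + y) = h x + h y" and hom: "\<And>c x. h (mscale c x) = mscale c (h x)"
    and S: "msubspace S"
  shows "msubspace (h ` S)"
proof -
  have h0: "h 0 = 0" using add[of 0 0] by simp
  show ?thesis
    using S unfolding mv.subspace_def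
    by (auto simp: h0 add[symmetric] hom[symmetric] intro!: image_eqI)
qed



lemma div_helper: "(a::real) * b = c * d \<Longrightarrow> a \<noteq> 0 \<Longrightarrow> d \<noteq> 0 \<Longrightarrow> b / d = c / a"
  by (simp add: frac_eq_eq mult.commute)

theorem proposition4:
  fixes C1 C2 W :: "('a::{finite,field}^'n^'m) set"
    and \<psi> :: "'a^'l \<Rightarrow> 'a^'n^'m"
    and B :: "'a^'n^'u"
  assumes C1: "msubspace C1" and C2: "msubspace C2" and strict: "C2 \<subset> C1"
    and W: "msubspace W" and W_sub: "W \<subseteq> C1" and W_inter: "C2 \<inter> W = {0}"
    and sum: "C1 = {c + w | c w. c \<in> C2 \<and> w \<in> W}"
    and l_card: "CARD('l) = mdim C1 - mdim C2"
    and psi_lin: "Vector_Spaces.linear (*s) mscale \<psi>"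
    and psi_inj: "inj \<psi>" and psi_im: "range \<psi> = W"
  shows "prob_space.mutual_information
           (measure_pmf (pair_pmf (pmf_of_set (UNIV :: ('a^'l) set)) (pmf_of_set C2)))
           (real CARD('a)) (count_space UNIV) (count_space UNIV)
           (\<lambda>(x, D). x) (\<lambda>(x, D). (\<psi> x + D) ** transpose B)
         = real (mdim (dual_code C2 \<inter> V_of (row_space B)))
           - real (mdim (dual_code C1 \<inter> V_of (row_space B)))"
proof -
  define F :: "'a^'n^'m \<Rightarrow> 'a^'u^'m" where "F = (\<lambda>c. c ** transpose B)"
  define g :: "'a^'u^'m \<Rightarrow> 'a^'n^'m" where "g = (\<lambda>A. A ** B)"
  define P where "P = (\<lambda>C::('a^'n^'m) set. {A::'a^'u^'m. \<forall>y\<in>F ` C. ip y A = 0})"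
  define X where "X = (\<lambda>C::('a^'n^'m) set. dual_code C \<inter> V_of (row_space B))"
  have Fadd: "F (x + y) = F x + F y" for x y by (simp add: F_def matrix_add_rdistrib')
  have Fsc: "F (mscale c x) = mscale c (F x)" for c x by (simp add: F_def mscale_mult_left)
  have gadd: "g (x + y) = g x + g y" for x y by (simp add: g_def matrix_add_rdistrib')
  have gsc: "g (mscale c x) = mscale c (g x)" for c x by (simp add: g_def mscale_mult_left)
  have key: "ip (F c) A = trace (c ** transpose (g A))" for c A
    by (simp add: F_def g_def matrix_transpose_mul matrix_mul_assoc trace_ip)
  have XgP: "X C = g ` P C" for C
  proof
    show "X C \<subseteq> g ` P C"
    proof
      fix V assume V: "V \<in> X C"
      then obtain A where A: "V = A ** B" using rowspace_char unfolding X_def by blast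
      have "A \<in> P C" unfolding P_def
      proof (intro CollectI ballI)
        fix y assume "y \<in> F ` C"
        then obtain c where c: "c \<in> C" "y = F c" by auto
        have "trace (c ** transpose V) = 0" using V c(1) by (auto simp: X_def dual_code_def)
        then show "ip y A = 0" using c(2) key[of c A] A by (simp add: g_def)
      qed
      then show "V \<in> g ` P C" using A by (auto simp: g_def)
    qed
    show "g ` P C \<subseteq> X C"
    proof
      fix V assume "V \<in> g ` P C"
      then obtain A where A: "A \<in> P C" "V = g A" by auto
      have "V \<in> V_of (row_space B)" using A(2) rowspace_char by (auto simp: g_def)
      moreover have "V \<in> dual_code C" unfolding dual_code_def
      proof (intro CollectI ballI)
        fix c assume "c \<in> C"
        then show "trace (c ** transpose V) = 0" using A key[of c A] by (auto simp: P_def)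
      qed
      ultimately show "V \<in> X C" by (simp add: X_def)
    qed
  qed
  have subP: "msubspace (P C)" for C
    unfolding mv.subspace_def P_def
    by (auto simp: ip_add2 ip_hom2) (simp add: ip_def)
  have kerP: "{A \<in> P C. g A = 0} = {A. g A = 0}" for C
  proof -
    have "A \<in> P C" if "g A = 0" for A
      unfolding P_def
    proof (intro CollectI ballI)
      fix y assume "y \<in> F ` C"
      then obtain c where c: "y = F c" by auto
      have "ip (F c) A = ip c 0" using key[of c A] that by (simp add: trace_ip)
      also have "\<dots> = 0" by (simp add: ip_def)
      finally show "ip y A = 0" using c by simp
    qed
    then show ?thesis by blast
  qed
  have cardX: "card (X C) * card {A. g A = 0} * card (F ` C) = CARD('a^'u^'m)"
    if C: "msubspace C" for C
  proof -
    have "card (g ` P C) * card {A \<in> P C. g A = 0} = card (P C)"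
      by (rule image_card_add[OF gadd])
         (auto intro: mv.subspace_add mv.subspace_diff subP)
    moreover have "card (F ` C) * card (P C) = CARD('a^'u^'m)"
      unfolding P_def by (rule duality_card_mat[OF msubspace_image[OF Fadd Fsc C]])
    ultimately show ?thesis using XgP kerP by (metis mult.commute)
  qed
  have subX: "msubspace (X C)" for C
    unfolding XgP by (rule msubspace_image[OF gadd gsc subP])
  have cardXpow: "card (X C) = CARD('a) ^ mdim (X C)" for C
    by (rule mv.card_subspace_pow[OF _ subX]) simp

  define \<Omega> where "\<Omega> = (UNIV :: ('a^'l) set) \<times> C2"
  define h where "h = (\<lambda>(x::'a^'l, D::'a^'n^'m). \<psi> x + D)"
  define Xf where "Xf = (\<lambda>(x::'a^'l, D::'a^'n^'m). x)"
  define Yf where "Yf = (\<lambda>(x::'a^'l, D::'a^'n^'m). (\<psi> x + D) ** transpose B)"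
  have Yf_eq: "Yf \<omega> = F (h \<omega>)" for \<omega> by (cases \<omega>) (simp add: Yf_def F_def h_def)
  have finC2: "finite C2" by simp
  have C20: "0 \<in> C2" using C2 by (rule mv.subspace_0)
  have finO: "finite \<Omega>" by simp
  have neO: "\<Omega> \<noteq> {}" using C20 by (auto simp: \<Omega>_def)
  have pp: "pair_pmf (pmf_of_set (UNIV :: ('a^'l) set)) (pmf_of_set C2) = pmf_of_set \<Omega>"
    unfolding \<Omega>_def by (rule pair_pmf_of_set') (use C20 in auto)
  have psiW: "\<psi> x \<in> W" for x using psi_im by auto
  have psiC1: "\<psi> x \<in> C1" for x using psiW W_sub by auto
  have C2C1: "C2 \<subseteq> C1" using strict by auto
  have hinj: "inj_on h \<Omega>"
  proof (rule inj_onI)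
    fix a b assume a: "a \<in> \<Omega>" and b: "b \<in> \<Omega>" and eq: "h a = h b"
    obtain x D where aa: "a = (x, D)" by (cases a)
    obtain x' D' where bb: "b = (x', D')" by (cases b)
    have D: "D \<in> C2" "D' \<in> C2" using a b aa bb by (auto simp: \<Omega>_def)
    have e: "\<psi> x + D = \<psi> x' + D'" using eq aa bb by (simp add: h_def)
    have e2: "\<psi> x - \<psi> x' = D' - D" using e by (simp add: algebra_simps)
    have m1: "\<psi> x - \<psi> x' \<in> W" using mv.subspace_diff[OF W psiW[of x] psiW[of x']] .
    have m2: "D' - D \<in> C2" using mv.subspace_diff[OF C2 D(2) D(1)] .
    have "\<psi> x - \<psi> x' \<in> C2 \<inter> W" using m1 m2 e2 by simp
    then have "\<psi> x - \<psi> x' = 0" using W_inter by blast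
    then have "\<psi> x = \<psi> x'" by simp
    then have "x = x'" using psi_inj by (simp add: inj_eq)
    then show "a = b" using aa bb e by simp
  qed
  have himg: "h ` \<Omega> = C1"
  proof
    show "h ` \<Omega> \<subseteq> C1"
      using C1 psiC1 C2C1 by (auto simp: h_def \<Omega>_def intro!: mv.subspace_add)
    show "C1 \<subseteq> h ` \<Omega>"
    proof
      fix c assume "c \<in> C1"
      then obtain d w where dw: "c = d + w" "d \<in> C2" "w \<in> W" using sum by blast
      then obtain x where "w = \<psi> x" using psi_im by auto
      then have "c = h (x, d)" using dw by (simp add: h_def add.commute)
      moreover have "(x, d) \<in> \<Omega>" using dw by (simp add: \<Omega>_def)
      ultimately show "c \<in> h ` \<Omega>" by blast
    qed
  qed
  have cardC1: "card C1 = card \<Omega>" using card_image[OF hinj] himg by simp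
  have pmfmap: "pmf (map_pmf f (pmf_of_set \<Omega>)) z = real (card (\<Omega> \<inter> f -` {z})) / real (card \<Omega>)" for f :: "_ \<Rightarrow> 'zz" and z
    by (simp add: pmf_map measure_pmf_of_set finO neO)
  have q1: "1 < real CARD('a)"
  proof -
    have "card {0::'a, 1} \<le> CARD('a)" by (rule card_mono) auto
    then show ?thesis by simp
  qed
  define K1 where "K1 = card {c\<in>C1. F c = 0}"
  define K2 where "K2 = card {c\<in>C2. F c = 0}"
  have FK1: "card (F ` C1) * K1 = card C1" unfolding K1_def
    by (rule image_card_add[OF Fadd]) (auto intro: mv.subspace_add mv.subspace_diff C1)
  have FK2: "card (F ` C2) * K2 = card C2" unfolding K2_def
    by (rule image_card_add[OF Fadd]) (auto intro: mv.subspace_add mv.subspace_diff C2)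
  define R where "R = real (card (F ` C1)) / real (card (F ` C2))"
  define Pxy where "Pxy = (\<lambda>z. pmf (map_pmf (\<lambda>\<omega>. (Xf \<omega>, Yf \<omega>)) (pmf_of_set \<Omega>)) z)"
  define Px where "Px = (\<lambda>z. pmf (map_pmf Xf (pmf_of_set \<Omega>)) z)"
  define Py where "Py = (\<lambda>z. pmf (map_pmf Yf (pmf_of_set \<Omega>)) z)"
  have termeq: "Pxy z * log (real CARD('a)) (Pxy z / (Px (fst z) * Py (snd z)))
      = Pxy z * log (real CARD('a)) R" for z
  proof (cases "Pxy z = 0")
    case True then show ?thesis by simp
  next
    case False
    obtain x y where z: "z = (x, y)" by (cases z)
    have "\<Omega> \<inter> (\<lambda>\<omega>. (Xf \<omega>, Yf \<omega>)) -` {z} \<noteq> {}"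
      using False by (auto simp: Pxy_def pmfmap)
    then obtain D0 where D0: "D0 \<in> C2" "F (\<psi> x + D0) = y"
      by (auto simp: z \<Omega>_def Xf_def Yf_def F_def)
    have Fsplit: "F (\<psi> x + D) = F (\<psi> x) + F D" for D by (rule Fadd)
    have s1: "\<Omega> \<inter> (\<lambda>\<omega>. (Xf \<omega>, Yf \<omega>)) -` {z} = (\<lambda>D. (x, D)) ` {D\<in>C2. F D = F D0}"
      using D0 by (auto simp: z \<Omega>_def Xf_def Yf_eq h_def Fsplit)
    have c1: "card (\<Omega> \<inter> (\<lambda>\<omega>. (Xf \<omega>, Yf \<omega>)) -` {z}) = K2"
      unfolding s1 K2_def
      by (subst card_image) (auto intro!: inj_onI fiber_card_add[OF Fadd] mv.subspace_add mv.subspace_diff C2 D0)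
    have s2: "\<Omega> \<inter> Xf -` {x} = (\<lambda>D. (x, D)) ` C2"
      by (auto simp: \<Omega>_def Xf_def)
    have c2: "card (\<Omega> \<inter> Xf -` {x}) = card C2"
      unfolding s2 by (subst card_image) (auto intro!: inj_onI)
    have s3: "h ` (\<Omega> \<inter> Yf -` {y}) = {c\<in>C1. F c = y}"
      using himg by (auto simp: Yf_eq)
    have c0: "\<psi> x + D0 \<in> C1" using C1 psiC1 C2C1 D0 by (auto intro: mv.subspace_add)
    have c3: "card (\<Omega> \<inter> Yf -` {y}) = K1"
    proof -
      have "card (\<Omega> \<inter> Yf -` {y}) = card {c\<in>C1. F c = y}"
        using card_image[OF inj_on_subset[OF hinj, of "\<Omega> \<inter> Yf -` {y}"]] s3 by auto
      also have "\<dots> = card {c\<in>C1. F c = F (\<psi> x + D0)}" using D0 by simp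
      also have "\<dots> = K1" unfolding K1_def
        by (rule fiber_card_add[OF Fadd]) (auto intro: mv.subspace_add mv.subspace_diff C1 c0)
      finally show ?thesis .
    qed
    have K1pos: "K1 > 0" and K2pos: "K2 > 0" and C2pos: "card C2 > 0" and Opos: "card \<Omega> > 0"
      using FK1 FK2 cardC1 finO neO C20 by (auto simp: card_gt_0_iff)
    have Fpos: "card (F ` C1) > 0" "card (F ` C2) > 0"
      using FK1 FK2 cardC1 Opos C2pos by (auto intro: Nat.gr0I)
    have "Pxy z / (Px (fst z) * Py (snd z))
        = (real K2 / real (card \<Omega>)) / ((real (card C2) / real (card \<Omega>)) * (real K1 / real (card \<Omega>)))"
      using c1 c2 c3 by (simp add: Pxy_def Px_def Py_def pmfmap z)
    also have "\<dots> = real K2 * real (card \<Omega>) / (real (card C2) * real K1)"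
      using Opos by (simp add: field_simps)
    also have "\<dots> = R"
    proof -
      have e1: "real (card (F ` C1)) * real K1 = real (card \<Omega>)" using FK1 cardC1 by (metis of_nat_mult)
      have e2: "real (card (F ` C2)) * real K2 = real (card C2)" using FK2 by (metis of_nat_mult)
      show ?thesis unfolding R_def using K1pos K2pos Fpos
        by (simp add: e1[symmetric] e2[symmetric] field_simps)
    qed
    finally show ?thesis by simp
  qed
  have "prob_space.mutual_information
           (measure_pmf (pair_pmf (pmf_of_set (UNIV :: ('a^'l) set)) (pmf_of_set C2)))
           (real CARD('a)) (count_space UNIV) (count_space UNIV)
           (\<lambda>(x, D). x) (\<lambda>(x, D). (\<psi> x + D) ** transpose B)
       = prob_space.mutual_information (measure_pmf (pmf_of_set \<Omega>))
           (real CARD('a)) (count_space UNIV) (count_space UNIV) Xf Yf"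
    by (simp add: pp Xf_def Yf_def)
  also have "\<dots> = (\<Sum>z\<in>UNIV. Pxy z * log (real CARD('a)) (Pxy z / (Px (fst z) * Py (snd z))))"
    unfolding Pxy_def Px_def Py_def by (rule MI_pmf[OF q1])
  also have "\<dots> = (\<Sum>z\<in>UNIV. Pxy z) * log (real CARD('a)) R"
    by (simp add: termeq sum_distrib_right)
  also have "(\<Sum>z\<in>UNIV. Pxy z) = 1"
    unfolding Pxy_def by (rule sum_pmf_eq_1) auto
  also have "R = real (card (X C2)) / real (card (X C1))"
  proof -
    have Kg: "card {A. g A = 0} > 0"
    proof -
      have "(0::'a^'u^'m) \<in> {A. g A = 0}" by (simp add: g_def)
      then show ?thesis by (auto simp: card_gt_0_iff)
    qed
    have "card (X C1) * card {A. g A = 0} * card (F ` C1) = card (X C2) * card {A. g A = 0} * card (F ` C2)"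
      using cardX[OF C1] cardX[OF C2] by simp
    then have e: "card (X C1) * card (F ` C1) = card (X C2) * card (F ` C2)"
    proof -
      have "card {A. g A = 0} * (card (X C1) * card (F ` C1)) = card {A. g A = 0} * (card (X C2) * card (F ` C2))"
        using \<open>card (X C1) * card {A. g A = 0} * card (F ` C1) = card (X C2) * card {A. g A = 0} * card (F ` C2)\<close>
        by (simp only: mult_ac)
      then show ?thesis using nat_mult_eq_cancel1[OF Kg] by blast
    qed
    have p1: "card (X C1) > 0" "card (F ` C2) > 0"
      using cardXpow[of C1] FK2 C20 by (auto intro: Nat.gr0I simp: card_eq_0_iff)
    have "real (card (X C1)) * real (card (F ` C1)) = real (card (X C2)) * real (card (F ` C2))"
      using e by (metis of_nat_mult)
    then show ?thesis unfolding R_def using p1 C20 by (intro div_helper) (auto simp: card_gt_0_iff)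
  qed
  also have "real (card (X C2)) / real (card (X C1))
      = real CARD('a) ^ mdim (X C2) / real CARD('a) ^ mdim (X C1)"
    by (simp add: cardXpow)
  finally show ?thesis
    using q1 by (simp add: log_divide log_nat_power X_def)
qed

end
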